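(* Let $X$ be a non-negative random variable, $\rho\ge0$, and $Y\sim\mathrm{MPo}(\rho X)$. Then the moments of $Y$ satisfy Carleman's condition if and only if the moments of $X$ do. Moreover, $\psi(z)=\mathbb{E}(e^{zX})$ exists in a neighbourhood of $0$ if and only if $\varphi(z)=\mathbb{E}(e^{zY})$ exists in a neighbourhood of $0$.
   Context: For non-negative $X$ and $\rho\ge0$, $Y\sim\mathrm{MPo}(\rho X)$ means $Y$ takes values in $\{0,1,2,\dots\}$ with $\mathbb{P}\{Y=\ell\}=\frac{\rho^\ell}{\ell!}\mathbb{E}(X^\ell e^{-\rho X})$. A random variable $Z$ with moments $m_s=\mathbb{E}(Z^s)$ satisfies Carleman's condition if $\sum_{s\ge1}m_{2s}^{-1/(2s)}=\infty$. *)

theory Defs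
  imports "HOL-Probability.Probability"
begin

definition moment :: "'a measure \<Rightarrow> ('a \<Rightarrow> real) \<Rightarrow> nat \<Rightarrow> real" where
  "moment M Z s = (\<integral>x. Z x ^ s \<partial>M)"

text \<open>Carleman's condition: all moments are finite and
  sum over s >= 1 of m_(2s)^(-1/(2s)) diverges (with the convention 0^(-a) = +infinity,
  i.e. a vanishing even moment makes the series diverge).\<close>
definition carleman :: "'a measure \<Rightarrow> ('a \<Rightarrow> real) \<Rightarrow> bool" where
  "carleman M Z \<longleftrightarrow>
     (\<forall>s. integrable M (\<lambda>x. Z x ^ s)) \<and>
     ((\<exists>s. moment M Z (2 * Suc s) = 0) \<or>
      \<not> summable (\<lambda>s. moment M Z (2 * Suc s) powr (- 1 / real (2 * Suc s))))"

definition mgf_exists_near_0 :: "'a measure \<Rightarrow> ('a \<Rightarrow> real) \<Rightarrow> bool" where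
  "mgf_exists_near_0 M Z \<longleftrightarrow>
     (\<exists>\<epsilon>>0. \<forall>z. \<bar>z\<bar> < \<epsilon> \<longrightarrow> integrable M (\<lambda>x. exp (z * Z x)))"

definition mixed_poisson :: "'a measure \<Rightarrow> ('a \<Rightarrow> real) \<Rightarrow> real \<Rightarrow> 'b measure \<Rightarrow> ('b \<Rightarrow> nat) \<Rightarrow> bool" where
  "mixed_poisson M X \<rho> N Y \<longleftrightarrow>
     Y \<in> measurable N (count_space UNIV) \<and>
     (\<forall>l. measure N {\<omega> \<in> space N. Y \<omega> = l} =
            \<rho> ^ l / fact l * (\<integral>x. X x ^ l * exp (- \<rho> * X x) \<partial>M))"

end

theory Submission
  imports Defs
begin

definition PS :: "real \<Rightarrow> nat \<Rightarrow> real \<Rightarrow> ennreal" where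
  "PS a n t = (\<Sum>l. ennreal ((real l + a)^n * t^l / fact l))"

lemma PS_shift:
  fixes g :: "nat \<Rightarrow> real"
  assumes g: "\<And>l. g l \<ge> 0" and t: "t \<ge> 0"
  shows "(\<Sum>l. ennreal (real l * g l * t^l / fact l)) = ennreal t * (\<Sum>l. ennreal (g (Suc l) * t^l / fact l))"
proof -
  have "(\<Sum>l. ennreal (real l * g l * t^l / fact l)) = (\<Sum>l. ennreal (real (l+1) * g (l+1) * t^(l+1) / fact (l+1))) + (\<Sum>j<1. ennreal (real j * g j * t^j / fact j))"
    by (rule suminf_offset) auto
  also have "\<dots> = (\<Sum>l. ennreal t * ennreal (g (Suc l) * t^l / fact l))"
  proof -
    have "real (l+1) * g (l+1) * t^(l+1) / fact (l+1) = t * (g (Suc l) * t^l / fact l)" for l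
    proof -
      have F: "fact (l+1) = (1 + real l) * (fact l :: real)" by (simp add: fact_Suc)
      have "real (l+1) * g (l+1) * t^(l+1) / fact (l+1) = ((1 + real l) * (t * (g (Suc l) * t^l))) / ((1 + real l) * fact l)"
        unfolding F by (simp add: mult_ac)
      also have "\<dots> = t * (g (Suc l) * t^l) / fact l"
        by (rule mult_divide_mult_cancel_left) (simp add: add_nonneg_eq_0_iff)
      finally show ?thesis by simp
    qed
    then have "ennreal (real (l+1) * g (l+1) * t^(l+1) / fact (l+1)) = ennreal t * ennreal (g (Suc l) * t^l / fact l)" for l
      using t g by (simp only: ennreal_mult[symmetric] divide_nonneg_nonneg zero_le_power mult_nonneg_nonneg fact_ge_zero)
    then show ?thesis by simp
  qed
  finally show ?thesis by simp
qed

lemma PS_rec: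
  assumes a: "a \<ge> 0" and t: "t \<ge> 0"
  shows "PS a (Suc n) t = ennreal t * PS (a+1) n t + ennreal a * PS a n t"
proof -
  have e: "ennreal ((real l + a)^Suc n * t^l / fact l) =
      ennreal (real l * (real l + a)^n * t^l / fact l) + ennreal a * ennreal ((real l + a)^n * t^l / fact l)" for l
  proof -
    have "(real l + a)^Suc n * t^l / fact l = real l * (real l + a)^n * t^l / fact l + a * ((real l + a)^n * t^l / fact l)"
      by (simp add: field_simps)
    then show ?thesis using a t by (simp add: ennreal_plus[symmetric] ennreal_mult[symmetric] del: ennreal_plus)
  qed
  have "PS a (Suc n) t = (\<Sum>l. ennreal (real l * (real l + a)^n * t^l / fact l)) + (\<Sum>l. ennreal a * ennreal ((real l + a)^n * t^l / fact l))"
    unfolding PS_def e by (rule suminf_add[symmetric]) auto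
  also have "(\<Sum>l. ennreal (real l * (real l + a)^n * t^l / fact l)) = ennreal t * PS (a+1) n t"
    unfolding PS_def using a t by (subst PS_shift) (auto simp: add_ac)
  finally show ?thesis unfolding PS_def by simp
qed

lemma PS_0: assumes "t \<ge> 0" shows "PS a 0 t = ennreal (exp t)"
proof -
  have "(\<lambda>l. t^l / fact l) sums exp t" using exp_converges[of t] by (simp add: divide_inverse mult.commute)
  then show ?thesis unfolding PS_def using assms by (intro suminf_ennreal_eq) auto
qed

lemma PS_bounds:
  assumes "a \<ge> 0" "t \<ge> 0"
  shows "ennreal ((t + a)^n * exp t) \<le> PS a n t \<and> PS a n t \<le> ennreal ((t + a + n)^n * exp t)"
  using assms
proof (induction n arbitrary: a)
  case 0 then show ?case by (simp add: PS_0)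
next
  case (Suc n)
  have IH1: "ennreal ((t + (a+1))^n * exp t) \<le> PS (a+1) n t" "PS (a+1) n t \<le> ennreal ((t + (a+1) + n)^n * exp t)"
    using Suc.IH[of "a+1"] Suc.prems by auto
  have IH2: "ennreal ((t + a)^n * exp t) \<le> PS a n t" "PS a n t \<le> ennreal ((t + a + n)^n * exp t)"
    using Suc.IH[of "a"] Suc.prems by auto
  have r: "PS a (Suc n) t = ennreal t * PS (a+1) n t + ennreal a * PS a n t" using PS_rec Suc.prems by blast
  have "ennreal ((t + a)^Suc n * exp t) = ennreal t * ennreal ((t + a)^n * exp t) + ennreal a * ennreal ((t + a)^n * exp t)"
    using Suc.prems by (simp add: ennreal_mult[symmetric] ennreal_plus[symmetric] field_simps del: ennreal_plus)
  also have "\<dots> \<le> ennreal t * PS (a+1) n t + ennreal a * PS a n t"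
  proof (intro add_mono mult_left_mono)
    show "ennreal ((t + a)^n * exp t) \<le> PS (a+1) n t"
    proof -
      have "(t + a)^n * exp t \<le> (t + (a+1))^n * exp t" using Suc.prems by (intro mult_right_mono power_mono) auto
      then show ?thesis using IH1(1) ennreal_leI order.trans by blast
    qed
  qed (use IH2 in auto)
  finally have L: "ennreal ((t + a)^Suc n * exp t) \<le> PS a (Suc n) t" using r by simp
  have "ennreal t * PS (a+1) n t + ennreal a * PS a n t \<le> ennreal t * ennreal ((t + a + Suc n)^n * exp t) + ennreal a * ennreal ((t + a + Suc n)^n * exp t)"
  proof (intro add_mono mult_left_mono)
    show "PS (a+1) n t \<le> ennreal ((t + a + Suc n)^n * exp t)" using IH1(2) by (simp add: add_ac)
    show "PS a n t \<le> ennreal ((t + a + Suc n)^n * exp t)"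
    proof -
      have "(t + a + n)^n * exp t \<le> (t + a + Suc n)^n * exp t" using Suc.prems by (intro mult_right_mono power_mono) auto
      then show ?thesis using IH2(2) ennreal_leI order.trans by blast
    qed
  qed auto
  also have "\<dots> = ennreal ((t+a) * ((t + a + Suc n)^n * exp t))"
    using Suc.prems by (simp add: ennreal_mult[symmetric] ennreal_plus[symmetric] field_simps del: ennreal_plus)
  also have "\<dots> \<le> ennreal ((t + a + Suc n)^Suc n * exp t)"
    using Suc.prems by (intro ennreal_leI) (simp add: mult_right_mono)
  finally show ?case using L r by simp
qed

lemma pow_fact_le_exp: assumes "(t::real) \<ge> 0" shows "t^l / fact l \<le> exp t"
proof -
  have "(\<Sum>n\<in>{l}. t^n /\<^sub>R fact n) \<le> (\<Sum>n. t^n /\<^sub>R fact n)"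
    using assms by (intro sum_le_suminf summable_exp_generic) auto
  then show ?thesis by (simp add: exp_def divide_inverse mult.commute)
qed

lemma pois_le_1: assumes "(t::real) \<ge> 0" shows "t^l / fact l * exp (- t) \<le> 1"
proof -
  have "t^l / fact l * exp (- t) \<le> exp t * exp (- t)"
    using pow_fact_le_exp[OF assms] by (intro mult_right_mono) auto
  then show ?thesis by (simp add: exp_minus)
qed

lemma mp_nn:
  fixes M :: "'a measure" and X :: "'a \<Rightarrow> real" and \<rho> :: real
    and N :: "'b measure" and Y :: "'b \<Rightarrow> nat"
  assumes PM: "prob_space M" and Xm: "X \<in> borel_measurable M"
    and X0: "\<forall>x\<in>space M. X x \<ge> 0"
    and rho: "\<rho> > 0"
    and PN: "prob_space N" and MP: "mixed_poisson M X \<rho> N Y"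
  shows "(\<integral>\<^sup>+\<omega>. f (Y \<omega>) \<partial>N) = (\<integral>\<^sup>+x. (\<Sum>l. f l * ennreal ((\<rho> * X x)^l / fact l * exp (- (\<rho> * X x)))) \<partial>M)"
proof -
  interpret M: prob_space M by fact
  interpret N: prob_space N by fact
  have Ym: "Y \<in> measurable N (count_space UNIV)" and Pl: "\<And>l. measure N {\<omega> \<in> space N. Y \<omega> = l} =
            \<rho> ^ l / fact l * (\<integral>x. X x ^ l * exp (- \<rho> * X x) \<partial>M)"
    using MP unfolding mixed_poisson_def by auto
  define A where "A l = {\<omega> \<in> space N. Y \<omega> = l}" for l
  have As: "A l \<in> sets N" for l unfolding A_def using Ym by measurable
  define g where "g l x = (\<rho> * X x)^l / fact l * exp (- (\<rho> * X x))" for l x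
  have gm: "g l \<in> borel_measurable M" for l unfolding g_def using Xm by measurable
  have g0: "x \<in> space M \<Longrightarrow> 0 \<le> g l x" for l x unfolding g_def using X0 rho by auto
  have g1: "x \<in> space M \<Longrightarrow> g l x \<le> 1" for l x unfolding g_def using X0 rho by (intro pois_le_1) auto
  have gi: "integrable M (g l)" for l
    by (rule M.integrable_const_bound[of _ 1]) (use g0 g1 gm in auto)
  have "emeasure N (A l) = ennreal (integral\<^sup>L M (g l))" for l
  proof -
    have "integral\<^sup>L M (g l) = \<rho> ^ l / fact l * (\<integral>x. X x ^ l * exp (- \<rho> * X x) \<partial>M)"
      unfolding g_def by (simp add: power_mult_distrib field_simps)
    then show ?thesis using Pl[of l] unfolding A_def by (simp add: N.emeasure_eq_measure)
  qed
  also have "ennreal (integral\<^sup>L M (g l)) = (\<integral>\<^sup>+x. ennreal (g l x) \<partial>M)" for l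
    by (rule nn_integral_eq_integral[symmetric]) (use gi g0 in auto)
  finally have EA: "emeasure N (A l) = (\<integral>\<^sup>+x. ennreal (g l x) \<partial>M)" for l .
  have "(\<integral>\<^sup>+\<omega>. f (Y \<omega>) \<partial>N) = (\<integral>\<^sup>+\<omega>. (\<Sum>l. f l * indicator (A l) \<omega>) \<partial>N)"
  proof (rule nn_integral_cong)
    fix \<omega> assume "\<omega> \<in> space N"
    then have "(\<lambda>l. f l * indicator (A l) \<omega>) = (\<lambda>l. if l = Y \<omega> then f l else 0)"
      unfolding A_def by (auto simp: indicator_def)
    then show "f (Y \<omega>) = (\<Sum>l. f l * indicator (A l) \<omega>)"
      using sums_single[of "Y \<omega>" f] by (simp add: sums_unique)
  qed
  also have "\<dots> = (\<Sum>l. \<integral>\<^sup>+\<omega>. f l * indicator (A l) \<omega> \<partial>N)"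
    by (rule nn_integral_suminf) (use As in measurable)
  also have "\<dots> = (\<Sum>l. f l * (\<integral>\<^sup>+x. ennreal (g l x) \<partial>M))"
    using As EA by (simp add: nn_integral_cmult_indicator)
  also have "\<dots> = (\<Sum>l. \<integral>\<^sup>+x. f l * ennreal (g l x) \<partial>M)"
    using gm by (simp add: nn_integral_cmult)
  also have "\<dots> = (\<integral>\<^sup>+x. (\<Sum>l. f l * ennreal (g l x)) \<partial>M)"
    by (rule nn_integral_suminf[symmetric]) (use gm in measurable)
  finally show ?thesis unfolding g_def .
qed

lemma two_max: "2 * ((a::real) + b) \<le> 4 * max a b"
proof (cases "a \<le> b")
  case True then have e: "max a b = b" by (rule max_absorb2)
  have "2 * (a + b) \<le> 4 * b" using True by simp
  then show ?thesis unfolding e .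
next
  case False then have e: "max a b = a" by simp
  have "2 * (a + b) \<le> 4 * a" using False by simp
  then show ?thesis unfolding e .
qed

lemma tails_to_0:
  fixes w :: "nat \<Rightarrow> real"
  assumes "summable w"
  shows "(\<lambda>n. \<Sum>j\<in>{n..<2*n}. w j) \<longlonglongrightarrow> 0"
proof -
  have s: "(\<lambda>n. \<Sum>j<n. w j) \<longlonglongrightarrow> suminf w" using assms summable_LIMSEQ by blast
  have s2: "(\<lambda>n. \<Sum>j<2*n. w j) \<longlonglongrightarrow> suminf w"
    by (rule LIMSEQ_subseq_LIMSEQ[OF s, unfolded o_def]) (simp add: strict_mono_def)
  have e: "(\<Sum>j\<in>{n..<2*n}. w j) = (\<Sum>j<2*n. w j) - (\<Sum>j<n. w j)" for n
    by (metis add_diff_cancel_left' lessThan_atLeast0 mult_2 sum.atLeastLessThan_concat zero_le le_add1)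
  show ?thesis unfolding e using tendsto_diff[OF s2 s] by simp
qed

lemma min_summable_imp:
  fixes v :: "nat \<Rightarrow> real"
  assumes pos: "\<And>s. v s > 0" and anti: "\<And>j k. j \<le> k \<Longrightarrow> v k \<le> v j"
    and sm: "summable (\<lambda>s. min (v s) (1 / real (Suc s)))"
  shows "summable v"
proof -
  define w where "w s = min (v s) (1 / real (Suc s))" for s
  define S where "S = {s. v s \<ge> 1 / real (Suc s)}"
  have "finite S"
  proof (rule ccontr)
    assume inf: "infinite S"
    have "(\<lambda>n. \<Sum>j\<in>{n..<2*n}. w j) \<longlonglongrightarrow> 0" using tails_to_0 sm unfolding w_def by blast
    then obtain N where N: "\<And>n. n \<ge> N \<Longrightarrow> \<bar>\<Sum>j\<in>{n..<2*n}. w j\<bar> < 1/3"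
      unfolding LIMSEQ_def dist_real_def by (metis diff_zero zero_less_divide_iff zero_less_numeral zero_less_one)
    obtain s where sS: "s \<in> S" and sN: "s \<ge> 2*N + 2" using inf infinite_nat_iff_unbounded_le by blast
    define n where "n = Suc s div 2"
    have nN: "n \<ge> N" and n1: "n \<ge> 1" and n2: "2*n \<le> Suc s" and n3: "Suc s \<le> 2*n + 1" using sN unfolding n_def by auto
    have "\<forall>j\<in>{n..<2*n}. w j \<ge> 1 / real (Suc s)"
    proof
      fix j assume "j \<in> {n..<2*n}"
      then have js: "j \<le> s" using n2 by auto
      have "v j \<ge> 1 / real (Suc s)" using anti[OF js] sS unfolding S_def by auto
      moreover have "1 / real (Suc j) \<ge> 1 / real (Suc s)" using js by (simp add: frac_le)
      ultimately show "w j \<ge> 1 / real (Suc s)" unfolding w_def by simp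
    qed
    then have "(\<Sum>j\<in>{n..<2*n}. w j) \<ge> (\<Sum>j\<in>{n..<2*n}. 1 / real (Suc s))"
      by (intro sum_mono) auto
    also have "(\<Sum>j\<in>{n..<2*n}. 1 / real (Suc s)) = real n / real (Suc s)" by simp
    also have "real n / real (Suc s) \<ge> 1/3"
    proof -
      have "real (Suc s) \<le> 3 * real n" using n3 n1 by linarith
      then show ?thesis by (simp add: field_simps)
    qed
    finally have "(\<Sum>j\<in>{n..<2*n}. w j) \<ge> 1/3" .
    with N[OF nN] show False by linarith
  qed
  then obtain K where K: "\<And>s. s \<in> S \<Longrightarrow> s < K" by (meson finite_nat_set_iff_bounded)
  have ev: "eventually (\<lambda>s. w s = v s) sequentially"
    unfolding eventually_sequentially
  proof (intro exI allI impI)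
    fix s assume "s \<ge> K" then have "s \<notin> S" using K by force
    then show "w s = v s" unfolding S_def w_def by auto
  qed
  show ?thesis using sm summable_cong[OF ev] unfolding w_def by simp
qed

lemma carleman_compare:
  fixes \<alpha> \<beta> :: "nat \<Rightarrow> real" and \<rho> :: real
  assumes rho: "\<rho> > 0" and apos: "\<And>s. \<alpha> s > 0"
    and mono: "\<And>j k. j \<le> k \<Longrightarrow> \<alpha> j \<le> \<alpha> k"
    and lo: "\<And>s. \<rho> * \<alpha> s \<le> \<beta> s" and up: "\<And>s. \<beta> s \<le> 2 * (\<rho> * \<alpha> s + 2 * real (Suc s))"
  shows "summable (\<lambda>s. 1 / \<beta> s) \<longleftrightarrow> summable (\<lambda>s. 1 / \<alpha> s)"
proof
  have bpos: "\<beta> s > 0" for s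
  proof -
    have "\<rho> * \<alpha> s > 0" using apos[of s] rho by simp
    then show ?thesis using lo[of s] by linarith
  qed
  assume sb: "summable (\<lambda>s. 1 / \<beta> s)"
  define c where "c = min (1 / \<rho>) (1/2) / 4"
  have c: "c > 0" unfolding c_def using rho by simp
  have le: "c * min (1 / \<alpha> s) (1 / real (Suc s)) \<le> 1 / \<beta> s" for s
  proof -
    have "1 / (2 * (\<rho> * \<alpha> s + 2 * real (Suc s))) \<le> 1 / \<beta> s"
      by (rule frac_le) (use up[of s] bpos[of s] in auto)
    moreover have "c * min (1 / \<alpha> s) (1 / real (Suc s)) \<le> 1 / (2 * (\<rho> * \<alpha> s + 2 * real (Suc s)))"
    proof -
      define m where "m = max (\<rho> * \<alpha> s) (2 * real (Suc s))"
      have mpos: "m > 0" unfolding m_def by auto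
      have "1 / (4 * m) \<le> 1 / (2 * (\<rho> * \<alpha> s + 2 * real (Suc s)))"
      proof -
        have "2 * (\<rho> * \<alpha> s + 2 * real (Suc s)) \<le> 4 * m" unfolding m_def by (rule two_max)
        moreover have "0 < 2 * (\<rho> * \<alpha> s + 2 * real (Suc s))" using apos[of s] rho by (simp add: add_pos_nonneg)
        ultimately show ?thesis by (intro frac_le) auto
      qed
      moreover have "c * min (1 / \<alpha> s) (1 / real (Suc s)) \<le> 1 / (4 * m)"
      proof (cases "\<rho> * \<alpha> s \<le> 2 * real (Suc s)")
        case True
        then have mcase: "m = 2 * real (Suc s)" unfolding m_def by auto
        moreover have "c \<le> 1/8" unfolding c_def by auto
        moreover have "min (1 / \<alpha> s) (1 / real (Suc s)) \<le> 1 / real (Suc s)" by simp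
        ultimately have "c * min (1 / \<alpha> s) (1 / real (Suc s)) \<le> (1/8) * (1 / real (Suc s))"
          using c apos[of s] by (intro mult_mono) auto
        then show ?thesis using mcase by simp
      next
        case False
        then have mcase: "m = \<rho> * \<alpha> s" unfolding m_def by auto
        moreover have "c \<le> 1/(4*\<rho>)" unfolding c_def using rho min.cobounded1[of "1/\<rho>" "1/2"] by (simp add: divide_right_mono)
        moreover have "min (1 / \<alpha> s) (1 / real (Suc s)) \<le> 1 / \<alpha> s" by simp
        ultimately have "c * min (1 / \<alpha> s) (1 / real (Suc s)) \<le> (1/(4*\<rho>)) * (1 / \<alpha> s)"
          using c apos[of s] rho by (intro mult_mono) auto
        then show ?thesis using mcase by simp
      qed
      ultimately show ?thesis by linarith
    qed
    ultimately show ?thesis by linarith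
  qed
  have "summable (\<lambda>s. c * min (1 / \<alpha> s) (1 / real (Suc s)))"
  proof (rule summable_comparison_test'[OF sb, of 0])
    fix n
    have "0 \<le> c * min (1 / \<alpha> n) (1 / real (Suc n))" using c apos[of n] by (intro mult_nonneg_nonneg) auto
    then show "norm (c * min (1 / \<alpha> n) (1 / real (Suc n))) \<le> 1 / \<beta> n" using le[of n] by simp
  qed
  then have "summable (\<lambda>s. min (1 / \<alpha> s) (1 / real (Suc s)))"
    by (subst (asm) summable_cmult_iff) (use c in simp)
  then show "summable (\<lambda>s. 1 / \<alpha> s)"
  proof (rule min_summable_imp[rotated 2])
    fix s show "1 / \<alpha> s > 0" using apos[of s] by simp
  next
    fix j k :: nat assume "j \<le> k"
    then have "\<alpha> j \<le> \<alpha> k" by (rule mono)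
    then show "1 / \<alpha> k \<le> 1 / \<alpha> j" using apos[of j] apos[of k] by (intro divide_left_mono) auto
  qed
next
  assume sa: "summable (\<lambda>s. 1 / \<alpha> s)"
  have bpos: "\<beta> s > 0" for s
  proof -
    have "\<rho> * \<alpha> s > 0" using apos[of s] rho by simp
    then show ?thesis using lo[of s] by linarith
  qed
  have "1 / \<beta> s \<le> (1 / \<rho>) * (1 / \<alpha> s)" for s
  proof -
    have "1 / \<beta> s \<le> 1 / (\<rho> * \<alpha> s)"
      by (rule frac_le) (use lo[of s] apos[of s] rho in auto)
    then show ?thesis by simp
  qed
  note le = this
  show "summable (\<lambda>s. 1 / \<beta> s)"
  proof (rule summable_comparison_test'[OF summable_mult[OF sa, of "1/\<rho>"], of 0])
    fix n show "norm (1 / \<beta> n) \<le> 1 / \<rho> * (1 / \<alpha> n)" using le[of n] bpos[of n] by simp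
  qed
qed

definition Tm :: "nat \<Rightarrow> real \<Rightarrow> ennreal" where
  "Tm n t = (\<Sum>l. ennreal (real l ^ n) * ennreal (t^l / fact l * exp (- t)))"

lemma Tm_eq: assumes "t \<ge> 0" shows "Tm n t = ennreal (exp (-t)) * PS 0 n t"
proof -
  have "ennreal (real l ^ n) * ennreal (t^l / fact l * exp (- t)) = ennreal (exp (-t)) * ennreal ((real l + 0)^n * t^l / fact l)" for l
  proof -
    have "real l ^ n * (t^l / fact l * exp (- t)) = exp (-t) * ((real l + 0)^n * t^l / fact l)" by simp
    then show ?thesis using assms by (simp add: ennreal_mult[symmetric])
  qed
  then show ?thesis unfolding Tm_def PS_def by simp
qed

lemma Tm_bounds: assumes "t \<ge> 0" shows "ennreal (t^n) \<le> Tm n t" "Tm n t \<le> ennreal ((t + n)^n)"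
proof -
  have b: "ennreal ((t + 0)^n * exp t) \<le> PS 0 n t" "PS 0 n t \<le> ennreal ((t + 0 + n)^n * exp t)"
    using PS_bounds[of 0 t n] assms by auto
  have "ennreal (t^n) = ennreal (exp (-t)) * ennreal ((t + 0)^n * exp t)"
    using assms by (simp add: ennreal_mult[symmetric] exp_minus)
  also have "\<dots> \<le> Tm n t" unfolding Tm_eq[OF assms] by (intro mult_left_mono b) auto
  finally show "ennreal (t^n) \<le> Tm n t" .
  have "Tm n t \<le> ennreal (exp (-t)) * ennreal ((t + 0 + n)^n * exp t)"
    unfolding Tm_eq[OF assms] by (intro mult_left_mono b) auto
  also have "\<dots> = ennreal ((t + n)^n)"
    using assms by (simp add: ennreal_mult[symmetric] exp_minus)
  finally show "Tm n t \<le> ennreal ((t + n)^n)" .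
qed

lemma Tm_zero: assumes "n \<ge> 1" shows "Tm n 0 = 0"
proof -
  have "(\<lambda>l. ennreal (real l ^ n) * ennreal (0^l / fact l * exp (- 0))) = (\<lambda>l. 0)"
    using assms by (intro ext, case_tac l) auto
  then show ?thesis unfolding Tm_def by simp
qed

lemma exp_ser: assumes "u \<ge> 0" shows "(\<Sum>l. ennreal (u^l / fact l)) = ennreal (exp u)"
proof -
  have "(\<lambda>l. u^l / fact l) sums exp u" using exp_converges[of u] by (simp add: divide_inverse mult.commute)
  then show ?thesis using assms by (intro suminf_ennreal_eq) auto
qed

lemma mgf_pt: assumes "t \<ge> 0"
  shows "(\<Sum>l. ennreal (exp (z * real l)) * ennreal (t^l / fact l * exp (- t))) = ennreal (exp ((exp z - 1) * t))"
proof -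
  have "ennreal (exp (z * real l)) * ennreal (t^l / fact l * exp (- t)) = ennreal (exp (-t)) * ennreal ((t * exp z)^l / fact l)" for l
  proof -
    have "exp (z * real l) * (t^l / fact l * exp (- t)) = exp (-t) * ((t * exp z)^l / fact l)"
    proof -
      have "exp (z * real l) = exp z ^ l" using exp_of_nat_mult[of l z] by (simp add: mult.commute)
      then show ?thesis by (simp add: power_mult_distrib)
    qed
    then show ?thesis using assms by (simp add: ennreal_mult[symmetric])
  qed
  then have "(\<Sum>l. ennreal (exp (z * real l)) * ennreal (t^l / fact l * exp (- t))) = (\<Sum>l. ennreal (exp (-t)) * ennreal ((t * exp z)^l / fact l))"
    by presburger
  also have "\<dots> = ennreal (exp (-t)) * (\<Sum>l. ennreal ((t * exp z)^l / fact l))"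
    by (rule ennreal_suminf_cmult)
  also have "\<dots> = ennreal (exp (-t)) * ennreal (exp (t * exp z))"
    using exp_ser[of "t * exp z"] assms by (simp only: mult_nonneg_nonneg exp_ge_zero)
  also have "\<dots> = ennreal (exp ((exp z - 1) * t))"
  proof -
    have "exp (-t) * exp (t * exp z) = exp (-t + t * exp z)" by (rule exp_add[symmetric])
    also have "-t + t * exp z = (exp z - 1) * t" by (simp add: algebra_simps)
    finally show ?thesis by (simp add: ennreal_mult[symmetric])
  qed
  finally show ?thesis .
qed

lemma pow_add_le: assumes "(a::real) \<ge> 0" "b \<ge> 0" shows "(a + b)^n \<le> 2^n * (a^n + b^n)"
proof -
  have "(a + b)^n \<le> (2 * max a b)^n" using assms by (intro power_mono) auto
  also have "\<dots> = 2^n * (max a b)^n" by (simp add: power_mult_distrib)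
  also have "(max a b)^n \<le> a^n + b^n" using assms by (cases "a \<le> b") (auto simp: max_def)
  then have "2^n * (max a b)^n \<le> 2^n * (a^n + b^n)" by simp
  finally show ?thesis .
qed

lemma pow_add_ge: assumes "(a::real) \<ge> 0" "b \<ge> 0" shows "a^n + b^n \<le> (a + b)^n + (if n = 0 then 1 else 0)"
proof (cases n)
  case 0 then show ?thesis by simp
next
  case (Suc m)
  have "a^n + b^n \<le> (a + b)^n"
  proof -
    have "a^n = a * a^m" "b^n = b * b^m" "(a+b)^n = (a+b)*(a+b)^m" using Suc by auto
    moreover have "a^m \<le> (a+b)^m" "b^m \<le> (a+b)^m" using assms by (auto intro: power_mono)
    moreover have "a * a^m \<le> a * (a+b)^m" "b * b^m \<le> b * (a+b)^m"
      using calculation(4,5) assms by (auto intro: mult_left_mono)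
    moreover have "(a+b)*(a+b)^m = a * (a+b)^m + b * (a+b)^m" by (simp add: distrib_right)
    ultimately show ?thesis by linarith
  qed
  then show ?thesis using Suc by simp
qed

lemma pow_powr_inv: assumes "(x::real) \<ge> 0" "n > 0" shows "(x^n) powr (1 / real n) = x"
proof (cases "x = 0")
  case True then show ?thesis using assms by simp
next
  case False
  then have "x > 0" using assms by auto
  then have "(x^n) powr (1 / real n) = (x powr real n) powr (1 / real n)" by (simp add: powr_realpow)
  also have "\<dots> = x" using assms by (simp add: powr_powr)
  finally show ?thesis .
qed

lemma powr_inv_pow: assumes "(x::real) \<ge> 0" "n > 0" shows "(x powr (1 / real n))^n = x"
proof (cases "x = 0")
  case True then show ?thesis using assms by simp
next
  case False
  then have "x > 0" using assms by auto
  then have "(x powr (1 / real n))^n = (x powr (1 / real n)) powr real n" by (simp add: powr_realpow)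
  also have "\<dots> = x" using assms by (simp add: powr_powr)
  finally show ?thesis .
qed

lemma convex_abs_powr: assumes "p \<ge> 1" shows "convex_on UNIV (\<lambda>t::real. \<bar>t\<bar> powr p)"
proof (rule convex_onI)
  fix t x y :: real assume t: "t > 0" "t < 1"
  have cv: "((1-t) * a + t * b) powr p \<le> (1-t) * a powr p + t * b powr p" if ab: "a \<ge> 0" "b \<ge> 0" for a b
  proof (cases "a = 0 \<or> b = 0")
    case True
    have tp: "t powr p \<le> t" using t assms by (simp add: powr_le_one_le)
    have tp': "(1-t) powr p \<le> 1-t" using t assms by (simp add: powr_le_one_le)
    show ?thesis
    proof (cases "a = 0")
      case True
      have "(t * b) powr p = t powr p * b powr p" using t ab by (simp add: powr_mult)
      also have "\<dots> \<le> t * b powr p" using tp by (simp add: mult_right_mono)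
      finally show ?thesis using True by simp
    next
      case False
      then have "b = 0" using \<open>a = 0 \<or> b = 0\<close> by simp
      have "((1-t) * a) powr p = (1-t) powr p * a powr p" using t ab by (simp add: powr_mult)
      also have "\<dots> \<le> (1-t) * a powr p" using tp' by (simp add: mult_right_mono)
      finally show ?thesis using \<open>b = 0\<close> by simp
    qed
  next
    case False
    then have "a \<in> {0<..}" "b \<in> {0<..}" using ab by auto
    from convex_onD[OF powr_convex[OF assms], of t a b, OF _ _ this] t show ?thesis by simp
  qed
  have "\<bar>(1 - t) *\<^sub>R x + t *\<^sub>R y\<bar> \<le> (1-t) * \<bar>x\<bar> + t * \<bar>y\<bar>"
  proof -
    have "\<bar>(1-t)*x + t*y\<bar> \<le> \<bar>(1-t)*x\<bar> + \<bar>t*y\<bar>" by (rule abs_triangle_ineq)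
    also have "\<dots> = (1-t)*\<bar>x\<bar> + t*\<bar>y\<bar>" using t by (simp add: abs_mult)
    finally show ?thesis by simp
  qed
  then have "\<bar>(1 - t) *\<^sub>R x + t *\<^sub>R y\<bar> powr p \<le> ((1-t) * \<bar>x\<bar> + t * \<bar>y\<bar>) powr p"
    using assms by (intro powr_mono2) auto
  also have "\<dots> \<le> (1-t) * \<bar>x\<bar> powr p + t * \<bar>y\<bar> powr p" by (rule cv) auto
  finally show "\<bar>(1 - t) *\<^sub>R x + t *\<^sub>R y\<bar> powr p \<le> (1 - t) * \<bar>x\<bar> powr p + t * \<bar>y\<bar> powr p" .
qed auto

lemma pow_powr_pt: assumes "(x::real) \<ge> 0" "1 \<le> j" "j \<le> k"
  shows "\<bar>x ^ j\<bar> powr (real k / real j) = x ^ k"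
proof (cases "x = 0")
  case True
  have z: "(0::real)^j = 0" "(0::real)^k = 0" using assms by (simp_all add: zero_power)
  show ?thesis unfolding True by (simp only: z) simp
next
  case False
  then have x: "x > 0" using assms by auto
  have "\<bar>x ^ j\<bar> = x powr real j" using x by (simp add: powr_realpow)
  then have "\<bar>x ^ j\<bar> powr (real k / real j) = x powr (real j * (real k / real j))" by (simp add: powr_powr)
  also have "real j * (real k / real j) = real k" using assms by simp
  finally show ?thesis using x by (simp add: powr_realpow)
qed

lemma lyap:
  fixes M :: "'a measure" and X :: "'a \<Rightarrow> real"
  assumes PM: "prob_space M" and Xm: "X \<in> borel_measurable M" and X0: "\<forall>x\<in>space M. X x \<ge> 0"
    and I: "\<And>s. integrable M (\<lambda>x. X x ^ s)" and jk: "1 \<le> j" "j \<le> k"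
  shows "(\<integral>x. X x ^ j \<partial>M) powr (1 / real j) \<le> (\<integral>x. X x ^ k \<partial>M) powr (1 / real k)"
proof -
  interpret prob_space M by fact
  define p where "p = real k / real j"
  have p1: "p \<ge> 1" unfolding p_def using jk by simp
  have qi: "integrable M (\<lambda>x. \<bar>X x ^ j\<bar> powr p)"
  proof -
    have "integrable M (\<lambda>x. X x ^ k) = integrable M (\<lambda>x. \<bar>X x ^ j\<bar> powr p)"
      by (rule Bochner_Integration.integrable_cong) (use X0 jk pow_powr_pt in \<open>auto simp: p_def\<close>)
    then show ?thesis using I[of k] by simp
  qed
  have "\<bar>expectation (\<lambda>x. X x ^ j)\<bar> powr p \<le> expectation (\<lambda>x. \<bar>X x ^ j\<bar> powr p)"
    by (rule jensens_inequality[where I=UNIV]) (use I qi convex_abs_powr[OF p1] in auto)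
  also have "expectation (\<lambda>x. \<bar>X x ^ j\<bar> powr p) = expectation (\<lambda>x. X x ^ k)"
    by (rule Bochner_Integration.integral_cong) (use X0 jk pow_powr_pt in \<open>auto simp: p_def\<close>)
  finally have J: "(expectation (\<lambda>x. X x ^ j)) powr p \<le> expectation (\<lambda>x. X x ^ k)"
    using X0 by (simp add: integral_nonneg)
  have e0: "expectation (\<lambda>x. X x ^ j) \<ge> 0" using X0 by (simp add: integral_nonneg)
  have "((expectation (\<lambda>x. X x ^ j)) powr p) powr (1 / real k) \<le> (expectation (\<lambda>x. X x ^ k)) powr (1 / real k)"
    by (rule powr_mono2) (use J e0 in auto)
  moreover have "((expectation (\<lambda>x. X x ^ j)) powr p) powr (1 / real k) = (expectation (\<lambda>x. X x ^ j)) powr (1 / real j)"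
    using jk by (simp add: powr_powr p_def)
  ultimately show ?thesis by simp
qed

locale mpsetup =
  fixes M :: "'a measure" and X :: "'a \<Rightarrow> real" and \<rho> :: real
    and N :: "'b measure" and Y :: "'b \<Rightarrow> nat"
  assumes PM: "prob_space M" and Xm: "X \<in> borel_measurable M"
    and X0: "\<forall>x\<in>space M. X x \<ge> 0"
    and rho: "\<rho> > 0"
    and PN: "prob_space N" and MP: "mixed_poisson M X \<rho> N Y"
begin

lemma Ym: "Y \<in> measurable N (count_space UNIV)" using MP unfolding mixed_poisson_def by auto

lemma Ym' [measurable]: "(\<lambda>\<omega>. real (Y \<omega>)) \<in> borel_measurable N"
  by (rule measurable_compose[OF Ym]) simp

definition "MX n = (\<integral>\<^sup>+x. ennreal (X x ^ n) \<partial>M)"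
definition "MY n = (\<integral>\<^sup>+\<omega>. ennreal (real (Y \<omega>) ^ n) \<partial>N)"

lemma MY_eq: "MY n = (\<integral>\<^sup>+x. Tm n (\<rho> * X x) \<partial>M)"
  unfolding MY_def Tm_def using mp_nn[OF PM Xm X0 rho PN MP, where f="\<lambda>l. ennreal (real l ^ n)"] by simp

lemma mgfY_eq: "(\<integral>\<^sup>+\<omega>. ennreal (exp (z * real (Y \<omega>))) \<partial>N) = (\<integral>\<^sup>+x. ennreal (exp ((exp z - 1) * (\<rho> * X x))) \<partial>M)"
proof -
  have "(\<integral>\<^sup>+\<omega>. ennreal (exp (z * real (Y \<omega>))) \<partial>N) = (\<integral>\<^sup>+x. (\<Sum>l. ennreal (exp (z * real l)) * ennreal ((\<rho> * X x)^l / fact l * exp (- (\<rho> * X x)))) \<partial>M)"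
    by (rule mp_nn[OF PM Xm X0 rho PN MP])
  also have "\<dots> = (\<integral>\<^sup>+x. ennreal (exp ((exp z - 1) * (\<rho> * X x))) \<partial>M)"
  proof (rule nn_integral_cong)
    fix x assume "x \<in> space M"
    then have "\<rho> * X x \<ge> 0" using X0 rho by simp
    then show "(\<Sum>l. ennreal (exp (z * real l)) * ennreal ((\<rho> * X x)^l / fact l * exp (- (\<rho> * X x)))) = ennreal (exp ((exp z - 1) * (\<rho> * X x)))"
      by (rule mgf_pt)
  qed
  finally show ?thesis .
qed

lemma MY_lower: "ennreal (\<rho>^n) * MX n \<le> MY n"
proof -
  have "ennreal (\<rho>^n) * MX n = (\<integral>\<^sup>+x. ennreal (\<rho>^n) * ennreal (X x ^ n) \<partial>M)"
    unfolding MX_def by (rule nn_integral_cmult[symmetric]) (use Xm in measurable)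
  also have "\<dots> = (\<integral>\<^sup>+x. ennreal ((\<rho> * X x) ^ n) \<partial>M)"
    by (rule nn_integral_cong) (use X0 rho in \<open>auto simp: ennreal_mult[symmetric] power_mult_distrib\<close>)
  also have "\<dots> \<le> (\<integral>\<^sup>+x. Tm n (\<rho> * X x) \<partial>M)"
    by (rule nn_integral_mono) (use X0 rho in \<open>auto intro!: Tm_bounds(1)\<close>)
  finally show ?thesis unfolding MY_eq .
qed

lemma MY_upper: "MY n \<le> ennreal (2^n * \<rho>^n) * MX n + ennreal (2^n * real n ^ n)"
proof -
  interpret M: prob_space M by (rule PM)
  have "MY n \<le> (\<integral>\<^sup>+x. ennreal ((\<rho> * X x + real n)^n) \<partial>M)"
    unfolding MY_eq by (rule nn_integral_mono) (use X0 rho in \<open>auto intro!: Tm_bounds(2)\<close>)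
  also have "\<dots> \<le> (\<integral>\<^sup>+x. ennreal (2^n * \<rho>^n) * ennreal (X x ^ n) + ennreal (2^n * real n ^ n) \<partial>M)"
  proof (rule nn_integral_mono)
    fix x assume x: "x \<in> space M"
    have "(\<rho> * X x + real n)^n \<le> 2^n * ((\<rho> * X x)^n + real n ^ n)"
      using X0 x rho by (intro pow_add_le) auto
    also have "\<dots> = (2^n * \<rho>^n) * (X x ^ n) + 2^n * real n ^ n" by (simp add: algebra_simps power_mult_distrib)
    finally show "ennreal ((\<rho> * X x + real n)^n) \<le> ennreal (2^n * \<rho>^n) * ennreal (X x ^ n) + ennreal (2^n * real n ^ n)"
      using X0 x rho by (simp add: ennreal_mult[symmetric] ennreal_plus[symmetric] del: ennreal_plus)
  qed
  also have "\<dots> = (\<integral>\<^sup>+x. ennreal (2^n * \<rho>^n) * ennreal (X x ^ n) \<partial>M) + (\<integral>\<^sup>+x. ennreal (2^n * real n ^ n) \<partial>M)"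
    by (rule nn_integral_add) (use Xm in measurable)
  also have "\<dots> = ennreal (2^n * \<rho>^n) * MX n + ennreal (2^n * real n ^ n)"
    unfolding MX_def by (subst nn_integral_cmult) (use Xm M.emeasure_space_1 in auto)
  finally show ?thesis .
qed

lemma MY_zero: assumes "n \<ge> 1" "MX n = 0" shows "MY n = 0"
proof -
  have "AE x in M. ennreal (X x ^ n) = 0"
    using assms(2) unfolding MX_def by (subst (asm) nn_integral_0_iff_AE) (use Xm in auto)
  then have "AE x in M. X x = 0"
    using X0 by (auto elim!: AE_mp intro!: AE_I2)
  then have "(\<integral>\<^sup>+x. Tm n (\<rho> * X x) \<partial>M) = (\<integral>\<^sup>+x. 0 \<partial>M)"
    by (rule nn_integral_cong_AE[OF AE_mp]) (auto intro!: AE_I2 simp: Tm_zero[OF assms(1)])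
  then show ?thesis unfolding MY_eq by simp
qed

lemma intX: "integrable M (\<lambda>x. X x ^ n) \<longleftrightarrow> MX n < \<infinity>"
proof -
  have "(\<integral>\<^sup>+x. ennreal (norm (X x ^ n)) \<partial>M) = MX n"
    unfolding MX_def by (rule nn_integral_cong) (use X0 in auto)
  then show ?thesis by (subst integrable_iff_bounded) (use Xm in auto)
qed

lemma intY: "integrable N (\<lambda>\<omega>. real (Y \<omega>) ^ n) \<longleftrightarrow> MY n < \<infinity>"
proof -
  have "(\<integral>\<^sup>+x. ennreal (norm (real (Y x) ^ n)) \<partial>N) = MY n"
    unfolding MY_def by (rule nn_integral_cong) auto
  then show ?thesis by (subst integrable_iff_bounded) auto
qed

lemma momX: "moment M X n = enn2real (MX n)"
  unfolding moment_def MX_def by (rule integral_eq_nn_integral) (use Xm X0 in auto)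

lemma momY: "moment N (\<lambda>\<omega>. real (Y \<omega>)) n = enn2real (MY n)"
  unfolding moment_def MY_def by (rule integral_eq_nn_integral) auto

end

context mpsetup begin

lemma int_equiv: "(\<forall>s. integrable N (\<lambda>\<omega>. real (Y \<omega>) ^ s)) \<longleftrightarrow> (\<forall>s. integrable M (\<lambda>x. X x ^ s))"
proof (intro iffI allI)
  fix s assume A: "\<forall>s. integrable N (\<lambda>\<omega>. real (Y \<omega>) ^ s)"
  then have "MY s < \<infinity>" using intY by blast
  then have "ennreal (\<rho>^s) * MX s < \<infinity>" using MY_lower[of s] by (meson le_less_trans)
  moreover have "ennreal (\<rho>^s) \<noteq> 0" using rho by simp
  ultimately have "MX s < \<infinity>" by (auto simp: ennreal_mult_less_top)
  then show "integrable M (\<lambda>x. X x ^ s)" using intX by blast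
next
  fix s assume A: "\<forall>s. integrable M (\<lambda>x. X x ^ s)"
  then have "MX s < \<infinity>" using intX by blast
  then have "ennreal (2^s * \<rho>^s) * MX s + ennreal (2^s * real s ^ s) < \<infinity>"
    by (simp add: ennreal_mult_less_top)
  then have "MY s < \<infinity>" using MY_upper[of s] by (meson le_less_trans)
  then show "integrable N (\<lambda>\<omega>. real (Y \<omega>) ^ s)" using intY by blast
qed

lemma real_bounds:
  assumes I: "\<forall>s. integrable M (\<lambda>x. X x ^ s)"
  defines "a \<equiv> moment M X" and "c \<equiv> moment N (\<lambda>\<omega>. real (Y \<omega>))"
  shows "a n \<ge> 0" "c n \<ge> 0" "\<rho>^n * a n \<le> c n" "c n \<le> 2^n * \<rho>^n * a n + 2^n * real n ^ n"
    "n \<ge> 1 \<Longrightarrow> a n = 0 \<Longrightarrow> c n = 0"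
proof -
  have fx: "MX n < \<infinity>" using I intX by blast
  have fy: "MY n < \<infinity>" using I int_equiv intY by blast
  have ea: "MX n = ennreal (a n)" unfolding a_def momX using fx by simp
  have ec: "MY n = ennreal (c n)" unfolding c_def momY using fy by simp
  show a0: "a n \<ge> 0" unfolding a_def momX by simp
  show c0: "c n \<ge> 0" unfolding c_def momY by simp
  have "ennreal (\<rho>^n * a n) \<le> ennreal (c n)"
    using MY_lower[of n] rho a0 unfolding ea ec by (simp add: ennreal_mult)
  then show "\<rho>^n * a n \<le> c n" using c0 by (simp add: ennreal_le_iff)
  have e1: "ennreal (2^n * \<rho>^n * a n + 2^n * real n ^ n) = ennreal (2^n * \<rho>^n * a n) + ennreal (2^n * real n ^ n)"
    by (rule ennreal_plus) (use rho a0 in auto)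
  have e2: "ennreal (2^n * \<rho>^n * a n) = ennreal (2^n * \<rho>^n) * ennreal (a n)"
    by (rule ennreal_mult) (use rho a0 in auto)
  have "ennreal (c n) \<le> ennreal (2^n * \<rho>^n * a n + 2^n * real n ^ n)"
    using MY_upper[of n] unfolding ea ec e1 e2 .
  moreover have "0 \<le> 2^n * \<rho>^n * a n + 2^n * real n ^ n" using rho a0 by auto
  ultimately show "c n \<le> 2^n * \<rho>^n * a n + 2^n * real n ^ n"
    by (simp add: ennreal_le_iff)
  assume "n \<ge> 1" "a n = 0"
  then have "MY n = 0" using MY_zero ea by simp
  then show "c n = 0" unfolding c_def momY by simp
qed

end

context mpsetup begin

lemma carl: "carleman N (\<lambda>\<omega>. real (Y \<omega>)) \<longleftrightarrow> carleman M X"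
proof (cases "\<forall>s. integrable M (\<lambda>x. X x ^ s)")
  case False
  then show ?thesis unfolding carleman_def using int_equiv by blast
next
  case True
  note I = True
  define a where "a = moment M X"
  define c where "c = moment N (\<lambda>\<omega>. real (Y \<omega>))"
  note rb = real_bounds[OF I, folded a_def c_def]
  have IY: "\<forall>s. integrable N (\<lambda>\<omega>. real (Y \<omega>) ^ s)" using I int_equiv by blast
  show ?thesis
  proof (cases "\<exists>s. a (2 * Suc s) = 0")
    case True
    then obtain s where "a (2 * Suc s) = 0" by blast
    then have "c (2 * Suc s) = 0" using rb(5)[of "2 * Suc s"] by simp
    then show ?thesis unfolding carleman_def using I IY True a_def c_def by auto
  next
    case False
    have apos: "a (2 * Suc s) > 0" for s using False rb(1)[of "2 * Suc s"] by (simp add: order_le_neq_trans)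
    have cpos: "c (2 * Suc s) > 0" for s
    proof -
      have "0 < \<rho>^(2 * Suc s) * a (2 * Suc s)" using apos[of s] rho by simp
      then show ?thesis using rb(3)[of "2 * Suc s"] by linarith
    qed
    have cne: "\<not> (\<exists>s. c (2 * Suc s) = 0)" using cpos by (metis less_irrefl)
    define \<alpha> where "\<alpha> s = a (2 * Suc s) powr (1 / real (2 * Suc s))" for s
    define \<beta> where "\<beta> s = c (2 * Suc s) powr (1 / real (2 * Suc s))" for s
    have tb: "c (2 * Suc s) powr (- 1 / real (2 * Suc s)) = 1 / \<beta> s" for s
      unfolding \<beta>_def using cpos[of s] by (simp add: powr_minus divide_inverse)
    have ta: "a (2 * Suc s) powr (- 1 / real (2 * Suc s)) = 1 / \<alpha> s" for s
      unfolding \<alpha>_def using apos[of s] by (simp add: powr_minus divide_inverse)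
    have aps: "\<alpha> s > 0" for s unfolding \<alpha>_def using apos[of s] by simp
    have an: "\<alpha> s ^ (2 * Suc s) = a (2 * Suc s)" for s
      unfolding \<alpha>_def using apos[of s] by (intro powr_inv_pow) auto
    have mono: "\<alpha> j \<le> \<alpha> k" if "j \<le> k" for j k
      unfolding \<alpha>_def a_def moment_def
      by (rule lyap[OF PM Xm X0 I[rule_format]]) (use that in auto)
    have lo: "\<rho> * \<alpha> s \<le> \<beta> s" for s
    proof -
      define n where "n = 2 * Suc s"
      have n: "n > 0" unfolding n_def by simp
      have "(\<rho>^n * a n) powr (1 / real n) \<le> c n powr (1 / real n)"
        by (rule powr_mono2) (use rb(3)[of n] rho rb(1)[of n] in auto)
      moreover have "(\<rho>^n * a n) powr (1 / real n) = (\<rho>^n) powr (1 / real n) * a n powr (1 / real n)"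
        using rho rb(1)[of n] by (intro powr_mult)
      moreover have "(\<rho>^n) powr (1 / real n) = \<rho>" using rho n by (intro pow_powr_inv) auto
      ultimately show ?thesis unfolding \<alpha>_def \<beta>_def n_def by simp
    qed
    have up: "\<beta> s \<le> 2 * (\<rho> * \<alpha> s + 2 * real (Suc s))" for s
    proof -
      define n where "n = 2 * Suc s"
      have n: "n > 0" unfolding n_def by simp
      have rn: "real n = 2 * real (Suc s)" unfolding n_def by simp
      have x0: "\<rho> * \<alpha> s \<ge> 0" using rho aps[of s] by simp
      have "c n \<le> 2^n * \<rho>^n * a n + 2^n * real n ^ n" by (rule rb(4))
      also have "\<dots> = 2^n * ((\<rho> * \<alpha> s)^n + real n ^ n)"
        using an[of s] unfolding n_def[symmetric] by (simp add: power_mult_distrib algebra_simps)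
      also have "\<dots> \<le> 2^n * (\<rho> * \<alpha> s + real n)^n"
        using pow_add_ge[OF x0, of "real n" n] n by (intro mult_left_mono) auto
      also have "\<dots> = (2 * (\<rho> * \<alpha> s + real n))^n" by (simp only: power_mult_distrib)
      finally have "c n \<le> (2 * (\<rho> * \<alpha> s + real n))^n" .
      then have "c n powr (1 / real n) \<le> ((2 * (\<rho> * \<alpha> s + real n))^n) powr (1 / real n)"
        by (intro powr_mono2) (use rb(2)[of n] in auto)
      also have "\<dots> = 2 * (\<rho> * \<alpha> s + real n)" using x0 n by (intro pow_powr_inv) auto
      finally show ?thesis unfolding \<beta>_def n_def[symmetric] rn .
    qed
    have "summable (\<lambda>s. 1 / \<beta> s) \<longleftrightarrow> summable (\<lambda>s. 1 / \<alpha> s)"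
      by (rule carleman_compare[OF rho aps mono lo up])
    moreover have fa: "(\<lambda>s. a (2 * Suc s) powr (- 1 / real (2 * Suc s))) = (\<lambda>s. 1 / \<alpha> s)"
      by (rule ext) (rule ta)
    moreover have fc: "(\<lambda>s. c (2 * Suc s) powr (- 1 / real (2 * Suc s))) = (\<lambda>s. 1 / \<beta> s)"
      by (rule ext) (rule tb)
    ultimately show ?thesis unfolding carleman_def c_def[symmetric] a_def[symmetric] fa fc
      using I IY False cne by blast
  qed
qed

end

context mpsetup begin

lemma intEX: "integrable M (\<lambda>x. exp (w * X x)) \<longleftrightarrow> (\<integral>\<^sup>+x. ennreal (exp (w * X x)) \<partial>M) < \<infinity>"
  by (subst integrable_iff_bounded) (use Xm in auto)

lemma intEY: "integrable N (\<lambda>\<omega>. exp (z * real (Y \<omega>))) \<longleftrightarrow> (\<integral>\<^sup>+\<omega>. ennreal (exp (z * real (Y \<omega>))) \<partial>N) < \<infinity>"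
  by (subst integrable_iff_bounded) auto

lemma negX: assumes "w \<le> 0" shows "integrable M (\<lambda>x. exp (w * X x))"
proof -
  interpret M: prob_space M by (rule PM)
  show ?thesis
  proof (rule M.integrable_const_bound[of _ 1])
    show "AE x in M. norm (exp (w * X x)) \<le> 1"
      using X0 assms by (auto intro!: AE_I2 simp: mult_nonpos_nonneg)
  qed (use Xm in measurable)
qed

lemma negY: assumes "z \<le> 0" shows "integrable N (\<lambda>\<omega>. exp (z * real (Y \<omega>)))"
proof -
  interpret N: prob_space N by (rule PN)
  show ?thesis
  proof (rule N.integrable_const_bound[of _ 1])
    show "AE x in N. norm (exp (z * real (Y x))) \<le> 1"
      using assms by (auto intro!: AE_I2 simp: mult_nonpos_nonneg)
  qed measurable
qed

lemma mgf_link: "(\<integral>\<^sup>+\<omega>. ennreal (exp (z * real (Y \<omega>))) \<partial>N) = (\<integral>\<^sup>+x. ennreal (exp (((exp z - 1) * \<rho>) * X x)) \<partial>M)"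
  unfolding mgfY_eq by (simp add: mult.assoc)

lemma mgf: "mgf_exists_near_0 M X \<longleftrightarrow> mgf_exists_near_0 N (\<lambda>\<omega>. real (Y \<omega>))"
proof
  assume "mgf_exists_near_0 M X"
  then obtain \<epsilon> where e: "\<epsilon> > 0" and EI: "\<And>w. \<bar>w\<bar> < \<epsilon> \<Longrightarrow> integrable M (\<lambda>x. exp (w * X x))"
    unfolding mgf_exists_near_0_def by blast
  define \<delta> where "\<delta> = ln (1 + \<epsilon> / \<rho>)"
  have d: "\<delta> > 0" unfolding \<delta>_def using e rho by (intro ln_gt_zero) simp
  show "mgf_exists_near_0 N (\<lambda>\<omega>. real (Y \<omega>))"
    unfolding mgf_exists_near_0_def
  proof (intro exI[of _ \<delta>] conjI allI impI d)
    fix z :: real assume z: "\<bar>z\<bar> < \<delta>"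
    show "integrable N (\<lambda>\<omega>. exp (z * real (Y \<omega>)))"
    proof (cases "z \<le> 0")
      case True then show ?thesis by (rule negY)
    next
      case False
      define w where "w = (exp z - 1) * \<rho>"
      have "exp z < exp \<delta>" using z by simp
      also have "exp \<delta> = 1 + \<epsilon> / \<rho>" unfolding \<delta>_def
        by (rule exp_ln) (rule add_pos_pos[OF zero_less_one divide_pos_pos[OF e rho]])
      finally have "exp z - 1 < \<epsilon> / \<rho>" by simp
      then have "w < \<epsilon>" unfolding w_def using pos_less_divide_eq[OF rho] by blast
      moreover have "w > 0" unfolding w_def using False rho by simp
      ultimately have "\<bar>w\<bar> < \<epsilon>" by simp
      then have "integrable M (\<lambda>x. exp (w * X x))" by (rule EI)
      then show ?thesis unfolding intEX intEY mgf_link w_def .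
    qed
  qed
next
  assume "mgf_exists_near_0 N (\<lambda>\<omega>. real (Y \<omega>))"
  then obtain \<epsilon> where e: "\<epsilon> > 0" and EI: "\<And>z. \<bar>z\<bar> < \<epsilon> \<Longrightarrow> integrable N (\<lambda>\<omega>. exp (z * real (Y \<omega>)))"
    unfolding mgf_exists_near_0_def by blast
  define \<delta> where "\<delta> = \<rho> * (exp \<epsilon> - 1)"
  have "exp \<epsilon> > 1" using e by simp
  then have d: "\<delta> > 0" unfolding \<delta>_def using rho by (intro mult_pos_pos) auto
  show "mgf_exists_near_0 M X"
    unfolding mgf_exists_near_0_def
  proof (intro exI[of _ \<delta>] conjI allI impI d)
    fix w :: real assume w: "\<bar>w\<bar> < \<delta>"
    show "integrable M (\<lambda>x. exp (w * X x))"
    proof (cases "w \<le> 0")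
      case True then show ?thesis by (rule negX)
    next
      case False
      define z where "z = ln (1 + w / \<rho>)"
      have wp: "w > 0" using False by simp
      have wr: "w / \<rho> > 0" by (rule divide_pos_pos[OF wp rho])
      have ez: "exp z = 1 + w / \<rho>" unfolding z_def
        by (rule exp_ln) (rule add_pos_pos[OF zero_less_one wr])
      have "z > 0" unfolding z_def by (rule ln_gt_zero) (use wr in simp)
      moreover have "z < \<epsilon>"
      proof -
        have "w < (exp \<epsilon> - 1) * \<rho>" using w wp unfolding \<delta>_def by (simp add: mult.commute)
        then have "w / \<rho> < exp \<epsilon> - 1" using pos_divide_less_eq[OF rho] by blast
        then have "exp z < exp \<epsilon>" using ez by simp
        then show ?thesis by simp
      qed
      ultimately have "\<bar>z\<bar> < \<epsilon>" by simp
      then have "integrable N (\<lambda>\<omega>. exp (z * real (Y \<omega>)))" by (rule EI)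
      moreover have "(exp z - 1) * \<rho> = w" using ez rho by simp
      ultimately show ?thesis unfolding intEX intEY mgf_link by metis
    qed
  qed
qed

end

theorem lemma1:
  fixes M :: "'a measure" and X :: "'a \<Rightarrow> real" and \<rho> :: real
    and N :: "'b measure" and Y :: "'b \<Rightarrow> nat"
  assumes "prob_space M" and "X \<in> borel_measurable M"
    and "\<forall>x\<in>space M. X x \<ge> 0"
    and "\<rho> > 0"
    and "prob_space N" and "mixed_poisson M X \<rho> N Y"
  shows "(carleman N (\<lambda>\<omega>. real (Y \<omega>)) \<longleftrightarrow> carleman M X) \<and>
         (mgf_exists_near_0 M X \<longleftrightarrow> mgf_exists_near_0 N (\<lambda>\<omega>. real (Y \<omega>)))"
proof -
  interpret mpsetup M X \<rho> N Y by (rule mpsetup.intro) (rule assms)+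
  show ?thesis by (intro conjI carl mgf)
qed

end
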